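(* Under the setting of the context, let $\mathbf e=e_1+\dots+e_d$. There exists a constant $C$, depending only on $E$, $P$ and $p$, such that for all $m\ge1$ and all integers $1\le n\le p\le q$, $$|R_q-R_n|^2+2\sum_{k=p}^{q-1}\langle m\mathbf e-R_n,(h-g)^-(\xi_k,R_k/m)\rangle+2\sum_{k=p}^{q-1}\langle R_n,(h-g)^+(\xi_k,R_k/m)\rangle\le|R_p-R_n|^2+C(q-p+m)+2\sum_{k=p}^{q-1}\langle R_k-R_n,Z_{k+1}\rangle.$$
   Context: Let $d\ge1$, $(e_1,\dots,e_d)$ the canonical basis, $\mathcal V=\{\pm e_1,\dots,\pm e_d\}$. Let $E$ be a finite set and $P$ an irreducible and aperiodic stochastic matrix on $E$ with unique invariant probability $\mu$. For $k\in E$, $y\in\mathbb R^d$, $p(k,y,\cdot)$ is a probability on $\mathcal V$, with $y\mapsto p(k,y,u)$ twice continuously differentiable with bounded derivatives. Let $g(k,y)=\sum_uu\,p(k,y,u)$, assumed to satisfy $\sum_k\mu(k)g(k,y)=0$ for all $y$, and $v(i,y)=\sum_{n\ge0}\sum_jP^n(i,j)g(j,y)$. Reflected kernel: for $k\in E$, $y\in[0,1]^d$, $\ell\le d$: if $0<y_\ell<1$, $q(k,y,\pm e_\ell)=p(k,y,\pm e_\ell)$; if $y_\ell=1$, $q(k,y,e_\ell)=0$, $q(k,y,-e_\ell)=p(k,y,e_\ell)+p(k,y,-e_\ell)$; if $y_\ell=0$, $q(k,y,-e_\ell)=0$, $q(k,y,e_\ell)=p(k,y,e_\ell)+p(k,y,-e_\ell)$;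 $h(k,y)=\sum_uu\,q(k,y,u)$; $c^{(m)}(i,y)=\sum_uq(i,y,u)[(v-g)(i,y+u/m)-(v-g)(i,y)]$. For $m\ge1$, $(\xi_n,R_n)_{n\ge0}$ is a Markov chain on $E\times\{0,\dots,m\}^d$ with $R_0=0$ and $\mathbb P(\xi_{n+1}=k,R_{n+1}=R_n+u\mid\xi_0,\dots,\xi_n,R_0,\dots,R_n)=P(\xi_n,k)q(\xi_n,R_n/m,u)$. $Z_{n+1}=R_{n+1}+v(\xi_{n+1},R_{n+1}/m)-[R_n+v(\xi_n,R_n/m)+(h-g)(\xi_n,R_n/m)+c^{(m)}(\xi_n,R_n/m)]$. For a vector $w$, $w^+$ and $w^-$ denote the coordinatewise positive and negative parts (so $w=w^+-w^-$, both with nonnegative entries). *)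

theory Defs
  imports "HOL-Analysis.Analysis"
begin

definition dirs :: "(real^'d) set" where
  "dirs = {axis l 1 | l. True} \<union> {axis l (-1) | l. True}"

primrec mpow :: "('e::finite \<Rightarrow> 'e \<Rightarrow> real) \<Rightarrow> nat \<Rightarrow> 'e \<Rightarrow> 'e \<Rightarrow> real" where
  "mpow P 0 i j = (if i = j then 1 else 0)"
| "mpow P (Suc n) i j = (\<Sum>k\<in>UNIV. mpow P n i k * P k j)"

definition stochastic :: "('e::finite \<Rightarrow> 'e \<Rightarrow> real) \<Rightarrow> bool" where
  "stochastic P \<longleftrightarrow> (\<forall>i j. 0 \<le> P i j) \<and> (\<forall>i. (\<Sum>j\<in>UNIV. P i j) = 1)"

definition irreducible_mc :: "('e::finite \<Rightarrow> 'e \<Rightarrow> real) \<Rightarrow> bool" where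
  "irreducible_mc P \<longleftrightarrow> (\<forall>i j. \<exists>n. mpow P n i j > 0)"

definition aperiodic_mc :: "('e::finite \<Rightarrow> 'e \<Rightarrow> real) \<Rightarrow> bool" where
  "aperiodic_mc P \<longleftrightarrow> (\<forall>i. Gcd {n::nat. 0 < n \<and> mpow P n i i > 0} = 1)"

definition invariant_prob :: "('e::finite \<Rightarrow> 'e \<Rightarrow> real) \<Rightarrow> ('e \<Rightarrow> real) \<Rightarrow> bool" where
  "invariant_prob P \<mu> \<longleftrightarrow> (\<forall>j. 0 \<le> \<mu> j) \<and> (\<Sum>j\<in>UNIV. \<mu> j) = 1
     \<and> (\<forall>j. (\<Sum>i\<in>UNIV. \<mu> i * P i j) = \<mu> j)"

definition C2_bdd :: "(real^'d \<Rightarrow> real) \<Rightarrow> bool" where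
  "C2_bdd f \<longleftrightarrow> (\<exists>(Df :: real^'d \<Rightarrow> ((real^'d) \<Rightarrow>\<^sub>L real))
       (D2f :: real^'d \<Rightarrow> ((real^'d) \<Rightarrow>\<^sub>L ((real^'d) \<Rightarrow>\<^sub>L real))) B.
     (\<forall>y. (f has_derivative blinfun_apply (Df y)) (at y)) \<and>
     (\<forall>y. (Df has_derivative blinfun_apply (D2f y)) (at y)) \<and>
     continuous_on UNIV D2f \<and>
     (\<forall>y. norm (Df y) \<le> B \<and> norm (D2f y) \<le> B))"

text \<open>g(k,y) = sum_u u p(k,y,u).\<close>
definition drift :: "('e \<Rightarrow> real^'d \<Rightarrow> real^'d \<Rightarrow> real) \<Rightarrow> 'e \<Rightarrow> real^'d \<Rightarrow> real^'d" where
  "drift p k y = (\<Sum>u\<in>dirs. p k y u *\<^sub>R u)"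

text \<open>v(i,y) = sum_{n>=0} sum_j P^n(i,j) g(j,y).\<close>
definition corr :: "('e::finite \<Rightarrow> 'e \<Rightarrow> real) \<Rightarrow> ('e \<Rightarrow> real^'d \<Rightarrow> real^'d \<Rightarrow> real)
    \<Rightarrow> 'e \<Rightarrow> real^'d \<Rightarrow> real^'d" where
  "corr P p i y = (\<Sum>n. \<Sum>j\<in>UNIV. mpow P n i j *\<^sub>R drift p j y)"

definition qref :: "('e \<Rightarrow> real^'d \<Rightarrow> real^'d \<Rightarrow> real) \<Rightarrow> 'e \<Rightarrow> real^'d \<Rightarrow> real^'d \<Rightarrow> real" where
  "qref p k y u =
     (if (\<exists>l. u = axis l 1) then
        (let l = (SOME l. u = axis l 1) in
          if y $ l = 1 then 0
          else if y $ l = 0 then p k y (axis l 1) + p k y (axis l (-1))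
          else p k y u)
      else if (\<exists>l. u = axis l (-1)) then
        (let l = (SOME l. u = axis l (-1)) in
          if y $ l = 0 then 0
          else if y $ l = 1 then p k y (axis l 1) + p k y (axis l (-1))
          else p k y u)
      else 0)"

text \<open>h(k,y) = sum_u u q(k,y,u).\<close>
definition rdrift :: "('e \<Rightarrow> real^'d \<Rightarrow> real^'d \<Rightarrow> real) \<Rightarrow> 'e \<Rightarrow> real^'d \<Rightarrow> real^'d" where
  "rdrift p k y = (\<Sum>u\<in>dirs. qref p k y u *\<^sub>R u)"

definition cm :: "('e::finite \<Rightarrow> 'e \<Rightarrow> real) \<Rightarrow> ('e \<Rightarrow> real^'d \<Rightarrow> real^'d \<Rightarrow> real) \<Rightarrow> nat
    \<Rightarrow> 'e \<Rightarrow> real^'d \<Rightarrow> real^'d" where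
  "cm P p m i y = (\<Sum>u\<in>dirs. qref p i y u *\<^sub>R
      ((corr P p i (y + inverse (real m) *\<^sub>R u) - drift p i (y + inverse (real m) *\<^sub>R u))
       - (corr P p i y - drift p i y)))"

text \<open>Zsucc P p m xi R n is Z_{n+1}.\<close>
definition Zsucc :: "('e::finite \<Rightarrow> 'e \<Rightarrow> real) \<Rightarrow> ('e \<Rightarrow> real^'d \<Rightarrow> real^'d \<Rightarrow> real) \<Rightarrow> nat
    \<Rightarrow> (nat \<Rightarrow> 'e) \<Rightarrow> (nat \<Rightarrow> real^'d) \<Rightarrow> nat \<Rightarrow> real^'d" where
  "Zsucc P p m \<xi> R n =
     (let y = inverse (real m) *\<^sub>R R n;
          y' = inverse (real m) *\<^sub>R R (Suc n)
      in R (Suc n) + corr P p (\<xi> (Suc n)) y'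
         - (R n + corr P p (\<xi> n) y + (rdrift p (\<xi> n) y - drift p (\<xi> n) y) + cm P p m (\<xi> n) y))"

definition pos_part :: "real^'d \<Rightarrow> real^'d" where
  "pos_part w = (\<chi> i. max (w $ i) 0)"

definition neg_part :: "real^'d \<Rightarrow> real^'d" where
  "neg_part w = (\<chi> i. max (- (w $ i)) 0)"

definition ones :: "real^'d" where
  "ones = (\<chi> i. 1)"

end

theory Submission imports Defs begin

lemma mpow_nonneg: "stochastic P \<Longrightarrow> 0 \<le> mpow P n i j"
  by (induction n arbitrary: j) (auto simp: stochastic_def intro!: sum_nonneg)

lemma mpow_rowsum: "stochastic P \<Longrightarrow> (\<Sum>j\<in>UNIV. mpow P n i j) = 1"
proof (induction n)
  case (Suc n)
  have "(\<Sum>j\<in>UNIV. mpow P (Suc n) i j) = (\<Sum>j\<in>UNIV. \<Sum>k\<in>UNIV. mpow P n i k * P k j)"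
    by simp
  also have "\<dots> = (\<Sum>k\<in>UNIV. \<Sum>j\<in>UNIV. mpow P n i k * P k j)"
    by (rule sum.swap)
  also have "\<dots> = (\<Sum>k\<in>UNIV. mpow P n i k * (\<Sum>j\<in>UNIV. P k j))"
    by (simp only: sum_distrib_left)
  also have "\<dots> = 1" using Suc by (simp add: stochastic_def)
  finally show ?case .
qed simp

lemma mpow_add: "mpow P (a+b) i j = (\<Sum>k\<in>UNIV. mpow P a i k * mpow P b k j)"
proof (induction b arbitrary: j)
  case 0
  then show ?case by (simp add: if_distrib cong: if_cong)
next
  case (Suc b)
  have "mpow P (a + Suc b) i j = (\<Sum>l\<in>UNIV. (\<Sum>k\<in>UNIV. mpow P a i k * mpow P b k l) * P l j)"
    using Suc by simp
  also have "\<dots> = (\<Sum>l\<in>UNIV. \<Sum>k\<in>UNIV. mpow P a i k * (mpow P b k l * P l j))"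
    by (simp only: sum_distrib_right mult.assoc)
  also have "\<dots> = (\<Sum>k\<in>UNIV. \<Sum>l\<in>UNIV. mpow P a i k * (mpow P b k l * P l j))"
    by (rule sum.swap)
  also have "\<dots> = (\<Sum>k\<in>UNIV. mpow P a i k * mpow P (Suc b) k j)"
    by (simp only: sum_distrib_left mpow.simps)
  finally show ?case .
qed

lemma mpow_inv: "invariant_prob P \<mu> \<Longrightarrow> (\<Sum>i\<in>UNIV. \<mu> i * mpow P n i j) = \<mu> j"
proof (induction n arbitrary: j)
  case 0
  then show ?case by (simp add: if_distrib cong: if_cong)
next
  case (Suc n)
  have "(\<Sum>i\<in>UNIV. \<mu> i * mpow P (Suc n) i j) = (\<Sum>i\<in>UNIV. \<Sum>k\<in>UNIV. \<mu> i * mpow P n i k * P k j)"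
    by (simp only: mpow.simps sum_distrib_left mult.assoc)
  also have "\<dots> = (\<Sum>k\<in>UNIV. \<Sum>i\<in>UNIV. \<mu> i * mpow P n i k * P k j)"
    by (rule sum.swap)
  also have "\<dots> = (\<Sum>k\<in>UNIV. (\<Sum>i\<in>UNIV. \<mu> i * mpow P n i k) * P k j)"
    by (simp only: sum_distrib_right)
  also have "\<dots> = \<mu> j" using Suc by (simp add: invariant_prob_def)
  finally show ?case .
qed

definition Tn :: "('e::finite \<Rightarrow> 'e \<Rightarrow> real) \<Rightarrow> nat \<Rightarrow> ('e \<Rightarrow> 'a::real_normed_vector) \<Rightarrow> 'e \<Rightarrow> 'a" where
  "Tn P n f i = (\<Sum>j\<in>UNIV. mpow P n i j *\<^sub>R f j)"

lemma Tn_add: "Tn P (a+b) f i = Tn P a (Tn P b f) i"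
proof -
  have "Tn P (a+b) f i = (\<Sum>j\<in>UNIV. \<Sum>k\<in>UNIV. mpow P a i k *\<^sub>R (mpow P b k j *\<^sub>R f j))"
    by (simp only: Tn_def mpow_add scaleR_sum_left scaleR_scaleR)
  also have "\<dots> = (\<Sum>k\<in>UNIV. \<Sum>j\<in>UNIV. mpow P a i k *\<^sub>R (mpow P b k j *\<^sub>R f j))"
    by (rule sum.swap)
  also have "\<dots> = Tn P a (Tn P b f) i"
    by (simp only: Tn_def scaleR_sum_right)
  finally show ?thesis .
qed

lemma Tn_mean: "invariant_prob P \<mu> \<Longrightarrow> (\<Sum>i\<in>UNIV. \<mu> i *\<^sub>R Tn P n f i) = (\<Sum>j\<in>UNIV. \<mu> j *\<^sub>R f j)"
proof -
  assume a: "invariant_prob P \<mu>"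
  have "(\<Sum>i\<in>UNIV. \<mu> i *\<^sub>R Tn P n f i) = (\<Sum>i\<in>UNIV. \<Sum>j\<in>UNIV. (\<mu> i * mpow P n i j) *\<^sub>R f j)"
    by (simp only: Tn_def scaleR_sum_right scaleR_scaleR)
  also have "\<dots> = (\<Sum>j\<in>UNIV. \<Sum>i\<in>UNIV. (\<mu> i * mpow P n i j) *\<^sub>R f j)"
    by (rule sum.swap)
  also have "\<dots> = (\<Sum>j\<in>UNIV. (\<Sum>i\<in>UNIV. \<mu> i * mpow P n i j) *\<^sub>R f j)"
    by (simp only: scaleR_sum_left)
  finally show ?thesis using mpow_inv[OF a] by simp
qed

lemma Tn_diff: "Tn P n (\<lambda>j. f j - g j) i = Tn P n f i - Tn P n g i"
  by (simp add: Tn_def scaleR_diff_right sum_subtractf)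

lemma Tn_bound:
  assumes "stochastic P" "\<And>j. norm (f j) \<le> b"
  shows "norm (Tn P n f i) \<le> b"
proof -
  have "norm (Tn P n f i) \<le> (\<Sum>j\<in>UNIV. norm (mpow P n i j *\<^sub>R f j))"
    unfolding Tn_def by (rule norm_sum)
  also have "\<dots> \<le> (\<Sum>j\<in>UNIV. mpow P n i j * b)"
    using assms mpow_nonneg[OF assms(1)] by (intro sum_mono) (simp add: mult_left_mono)
  also have "\<dots> = b" using mpow_rowsum[OF assms(1)] by (simp add: sum_distrib_right[symmetric])
  finally show ?thesis .
qed

lemma Tn_contract:
  assumes st: "stochastic P" and inv: "invariant_prob P \<mu>"
    and Q: "\<And>i j. mpow P N i j \<ge> \<delta>" and d0: "0 \<le> \<delta>"
    and mean: "(\<Sum>j\<in>UNIV. \<mu> j *\<^sub>R f j) = 0"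
    and fb: "\<And>j. norm (f j) \<le> b"
  shows "norm (Tn P N f i) \<le> (1 - \<delta>) * b"
proof -
  have mu1: "\<mu> j \<le> 1" for j
  proof -
    have "\<mu> j \<le> (\<Sum>j\<in>UNIV. \<mu> j)"
      using inv by (intro member_le_sum) (auto simp: invariant_prob_def)
    then show ?thesis using inv by (simp add: invariant_prob_def)
  qed
  have nn: "0 \<le> mpow P N i j - \<delta> * \<mu> j" for j
  proof -
    have "\<delta> * \<mu> j \<le> \<delta>" using mu1[of j] d0 by (simp add: mult_left_le)
    then show ?thesis using Q[of i j] by linarith
  qed
  have "Tn P N f i = (\<Sum>j\<in>UNIV. mpow P N i j *\<^sub>R f j) - \<delta> *\<^sub>R (\<Sum>j\<in>UNIV. \<mu> j *\<^sub>R f j)"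
    using mean by (simp add: Tn_def)
  also have "\<dots> = (\<Sum>j\<in>UNIV. (mpow P N i j - \<delta> * \<mu> j) *\<^sub>R f j)"
    by (simp add: scaleR_sum_right scaleR_diff_left sum_subtractf)
  finally have e: "Tn P N f i = (\<Sum>j\<in>UNIV. (mpow P N i j - \<delta> * \<mu> j) *\<^sub>R f j)" .
  have "norm (Tn P N f i) \<le> (\<Sum>j\<in>UNIV. norm ((mpow P N i j - \<delta> * \<mu> j) *\<^sub>R f j))"
    unfolding e by (rule norm_sum)
  also have "\<dots> \<le> (\<Sum>j\<in>UNIV. (mpow P N i j - \<delta> * \<mu> j) * b)"
    using nn fb by (intro sum_mono) (simp add: mult_left_mono)
  also have "\<dots> = (1 - \<delta>) * b"
    using mpow_rowsum[OF st] inv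
    by (simp add: sum_distrib_right[symmetric] sum_subtractf sum_distrib_left[symmetric] invariant_prob_def)
  finally show ?thesis .
qed

lemma Tn_iter:
  assumes st: "stochastic P" and inv: "invariant_prob P \<mu>"
    and Q: "\<And>i j. mpow P N i j \<ge> \<delta>" and d0: "0 \<le> \<delta>"
  shows "(\<Sum>j\<in>UNIV. \<mu> j *\<^sub>R f j) = 0 \<Longrightarrow> (\<And>j. norm (f j) \<le> b) \<Longrightarrow>
     norm (Tn P (N*k + r) f i) \<le> (1 - \<delta>)^k * b"
proof (induction k arbitrary: f b i)
  case 0
  then show ?case using Tn_bound[OF st, of f b r i] by simp
next
  case (Suc k)
  have e: "N * Suc k + r = (N*k + r) + N" by simp
  have m: "(\<Sum>j\<in>UNIV. \<mu> j *\<^sub>R Tn P N f j) = 0" using Suc.prems(1) Tn_mean[OF inv, of N f] by simp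
  have b: "norm (Tn P N f j) \<le> (1 - \<delta>) * b" for j
    using Tn_contract[OF st inv Q d0 Suc.prems] .
  have "norm (Tn P (N * Suc k + r) f i) = norm (Tn P (N*k + r) (Tn P N f) i)"
    unfolding e Tn_add ..
  also have "\<dots> \<le> (1 - \<delta>)^k * ((1 - \<delta>) * b)"
    by (rule Suc.IH[OF m b])
  finally show ?case by (simp add: mult_ac)
qed

lemma addclosed_gcd:
  fixes S :: "nat set"
  assumes cl: "\<And>a b. a \<in> S \<Longrightarrow> b \<in> S \<Longrightarrow> a + b \<in> S"
    and g: "Gcd S = 1"
  shows "\<exists>N. \<forall>n\<ge>N. n \<in> S"
proof -
  define S0 where "S0 = insert 0 S"
  have cl0: "a \<in> S0 \<Longrightarrow> b \<in> S0 \<Longrightarrow> a + b \<in> S0" for a b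
    using cl by (auto simp: S0_def)
  have mul0: "k * a \<in> S0" if a: "a \<in> S0" for a k
  proof (induction k)
    case 0
    then show ?case by (simp add: S0_def)
  next
    case (Suc k)
    then show ?case using cl0[OF a Suc.IH] by simp
  qed
  obtain s0 where s0: "s0 \<in> S" "0 < s0"
  proof -
    have "\<not> S \<subseteq> {0}"
    proof
      assume "S \<subseteq> {0}"
      then have "Gcd S = 0" by (simp add: Gcd_0_iff)
      then show False using g by simp
    qed
    then show ?thesis using that by auto
  qed
  define d where "d = (LEAST d. 0 < d \<and> (\<exists>y\<in>S0. y + d \<in> S0))"
  have ex: "0 < s0 \<and> (\<exists>y\<in>S0. y + s0 \<in> S0)" using s0 by (auto simp: S0_def)
  have dP: "0 < d \<and> (\<exists>y\<in>S0. y + d \<in> S0)"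
    unfolding d_def by (rule LeastI[of _ s0], rule ex)
  then obtain y where y: "y \<in> S0" "y + d \<in> S0" "0 < d" by auto
  have dmin: "\<not> (0 < r \<and> (\<exists>y\<in>S0. y + r \<in> S0))" if "r < d" for r
    using not_less_Least[of r "\<lambda>d. 0 < d \<and> (\<exists>y\<in>S0. y + d \<in> S0)"] that
    unfolding d_def by blast
  have ddvd: "d dvd s" if "s \<in> S" for s
  proof -
    define q where "q = s div d"
    define r where "r = s mod d"
    have sqr: "s = q * d + r" unfolding q_def r_def by simp
    have rl: "r < d" unfolding r_def using y(3) by simp
    have z: "q * (y + d) \<in> S0" using mul0[OF y(2)] .
    have "q * (y + d) + r = q * y + s" using sqr by (simp add: algebra_simps)
    also have "\<dots> \<in> S0" using cl0[OF mul0[OF y(1)]] that by (auto simp: S0_def)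
    finally have "q * (y + d) + r \<in> S0" .
    with z dmin[OF rl] have "r = 0" by (metis gr0I)
    then show ?thesis using sqr by simp
  qed
  have "d dvd Gcd S" by (rule Gcd_greatest) (use ddvd in auto)
  then have d1: "d = 1" using g by simp
  show ?thesis
  proof (intro exI allI impI)
    fix n assume nN: "y * y + 1 \<le> n"
    have "n \<in> S0"
    proof (cases "y = 0")
      case True
      then have "1 \<in> S0" using y d1 by simp
      from mul0[OF this, of n] show ?thesis by simp
    next
      case False
      define a where "a = n div y"
      define r where "r = n mod y"
      have ry: "r < y" using False unfolding r_def by simp
      have "y * y div y \<le> n div y" using nN by (intro div_le_mono) simp
      then have ya: "y \<le> a" using False unfolding a_def by simp
      have n: "n = (a - r) * y + r * (y + 1)"
      proof -
        have "n = a * y + r" unfolding a_def r_def by simp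
        also have "\<dots> = (a - r) * y + r * y + r" using ry ya
          by (simp add: diff_mult_distrib)
        finally show ?thesis by (simp add: algebra_simps)
      qed
      have "(a - r) * y + r * (y + 1) \<in> S0"
        using cl0[OF mul0[OF y(1)] mul0[of "y+1"]] y(2) d1 by simp
      then show ?thesis using n by simp
    qed
    then show "n \<in> S" using nN by (auto simp: S0_def)
  qed
qed

lemma mpow_ge:
  assumes "stochastic P"
  shows "mpow P a i k * mpow P b k j \<le> mpow P (a+b) i j"
  unfolding mpow_add
  by (rule member_le_sum[where i=k and f="\<lambda>k. mpow P a i k * mpow P b k j"]) 
     (auto intro: mult_nonneg_nonneg mpow_nonneg[OF assms])

lemma primitive:
  assumes st: "stochastic P" and irr: "irreducible_mc P" and ap: "aperiodic_mc P"
  shows "\<exists>N>0. \<forall>i j. 0 < mpow P N i j"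
proof -
  have "\<exists>N. \<forall>n\<ge>N. n \<in> {n. 0 < n \<and> 0 < mpow P n i i}" for i
  proof (rule addclosed_gcd)
    fix a b assume "a \<in> {n. 0 < n \<and> 0 < mpow P n i i}" "b \<in> {n. 0 < n \<and> 0 < mpow P n i i}"
    then have "0 < a + b" "0 < mpow P a i i * mpow P b i i" by auto
    then show "a + b \<in> {n. 0 < n \<and> 0 < mpow P n i i}"
      using mpow_ge[OF st, of a i i b i] by auto
  next
    show "Gcd {n. 0 < n \<and> 0 < mpow P n i i} = 1" using ap by (simp add: aperiodic_mc_def)
  qed
  then have exN: "\<exists>N. \<forall>n\<ge>N. 0 < mpow P n i i" for i by blast
  define Ni where "Ni i = (SOME N. \<forall>n\<ge>N. 0 < mpow P n i i)" for i
  have Ni: "0 < mpow P n i i" if "n \<ge> Ni i" for i n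
  proof -
    have "\<forall>n\<ge>Ni i. 0 < mpow P n i i" unfolding Ni_def by (rule someI_ex[OF exN])
    then show ?thesis using that by blast
  qed
  have exr: "\<exists>n. 0 < mpow P n i j" for i j using irr unfolding irreducible_mc_def by blast
  define rf where "rf i j = (SOME n. 0 < mpow P n i j)" for i j
  have rf: "0 < mpow P (rf i j) i j" for i j unfolding rf_def by (rule someI_ex[OF exr])
  define N where "N = Suc (\<Sum>i\<in>UNIV. \<Sum>j\<in>UNIV. Ni i + rf i j)"
  have Nge: "Ni i + rf i j \<le> N" for i j
  proof -
    have "Ni i + rf i j \<le> (\<Sum>j\<in>UNIV. Ni i + rf i j)"
      by (rule member_le_sum) auto
    also have "\<dots> \<le> (\<Sum>i\<in>UNIV. \<Sum>j\<in>UNIV. Ni i + rf i j)"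
      by (rule member_le_sum[where i=i and f="\<lambda>i. \<Sum>j\<in>UNIV. Ni i + rf i j"]) auto
    also have "\<dots> \<le> N" unfolding N_def by simp
    finally show ?thesis .
  qed
  have "0 < mpow P N i j" for i j
  proof -
    have e: "N = (N - rf i j) + rf i j" using Nge[of i j] by simp
    have "0 < mpow P (N - rf i j) i i * mpow P (rf i j) i j"
      using Ni[of i "N - rf i j"] Nge[of i j] rf[of i j] by simp
    also have "\<dots> \<le> mpow P N i j"
      using mpow_ge[OF st, of "N - rf i j" i i "rf i j" j] e by simp
    finally show ?thesis .
  qed
  then show ?thesis unfolding N_def by blast
qed

lemma Tn_series:
  fixes P :: "'e::finite \<Rightarrow> 'e \<Rightarrow> real"
  assumes st: "stochastic P" and irr: "irreducible_mc P" and ap: "aperiodic_mc P"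
    and inv: "invariant_prob P \<mu>"
  shows "\<exists>K\<ge>0. \<forall>(f::'e \<Rightarrow> 'a::banach) b i. (\<Sum>j\<in>UNIV. \<mu> j *\<^sub>R f j) = 0 \<longrightarrow> (\<forall>j. norm (f j) \<le> b)
      \<longrightarrow> summable (\<lambda>n. Tn P n f i) \<and> norm (\<Sum>n. Tn P n f i) \<le> K * b"
proof -
  obtain N where N0: "0 < N" and Npos: "\<And>i j. 0 < mpow P N i j"
    using primitive[OF st irr ap] by blast
  define \<delta>0 where "\<delta>0 = Min (range (\<lambda>(i,j). mpow P N i j))"
  have fin: "finite (range (\<lambda>(i,j). mpow P N i j))" by simp
  have d0le: "\<delta>0 \<le> mpow P N i j" for i j
    unfolding \<delta>0_def by (rule Min_le[OF fin]) (auto intro: image_eqI[of _ _ "(i,j)"])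
  have d0pos: "0 < \<delta>0"
  proof -
    have "\<delta>0 \<in> range (\<lambda>(i,j). mpow P N i j)" unfolding \<delta>0_def
      by (rule Min_in[OF fin]) simp
    then show ?thesis using Npos by auto
  qed
  define \<delta> where "\<delta> = min \<delta>0 (1/2)"
  have dle: "\<delta> \<le> mpow P N i j" for i j using d0le[of i j] by (simp add: \<delta>_def)
  have dpos: "0 < \<delta>" "\<delta> \<le> 1/2" using d0pos by (auto simp: \<delta>_def)
  define \<theta> where "\<theta> = 1 - \<delta>"
  have th: "1/2 \<le> \<theta>" "\<theta> < 1" using dpos by (auto simp: \<theta>_def)
  define \<rho> where "\<rho> = root N \<theta>"
  have rho: "0 < \<rho>" "\<rho> < 1" "\<rho> ^ N = \<theta>"
    using th N0 by (auto simp: \<rho>_def real_root_gt_zero)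
  define K where "K = 1 / (\<theta> * (1 - \<rho>))"
  have K0: "0 \<le> K" using th rho by (simp add: K_def)
  have geo: "\<theta> ^ (n div N) \<le> \<rho> ^ n / \<theta>" for n
  proof -
    have "\<theta> ^ (n div N) * \<theta> = \<rho> ^ (N * (n div N) + N)"
      by (simp add: power_add power_mult rho(3)[symmetric] mult.commute)
    also have "\<dots> \<le> \<rho> ^ n"
    proof (rule power_decreasing)
      have "n = N * (n div N) + n mod N" by simp
      moreover have "n mod N < N" using N0 by simp
      ultimately show "n \<le> N * (n div N) + N" by linarith
    qed (use rho in auto)
    finally show ?thesis using th by (simp add: field_simps)
  qed
  have "summable (\<lambda>n. Tn P n f i) \<and> norm (\<Sum>n. Tn P n f i) \<le> K * b"
    if mean: "(\<Sum>j\<in>UNIV. \<mu> j *\<^sub>R f j) = 0" and fb: "\<forall>j. norm (f j) \<le> b"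
    for f :: "'e \<Rightarrow> 'a" and b i
  proof -
    have b0: "0 \<le> b" using fb norm_ge_zero order_trans by blast
    have bn: "norm (Tn P n f i) \<le> b / \<theta> * \<rho> ^ n" for n
    proof -
      have "norm (Tn P (N * (n div N) + n mod N) f i) \<le> (1 - \<delta>) ^ (n div N) * b"
        by (rule Tn_iter[OF st inv dle _ mean]) (use dpos fb in auto)
      also have "\<dots> \<le> \<rho> ^ n / \<theta> * b"
        using geo[of n] b0 unfolding \<theta>_def by (rule mult_right_mono)
      finally show ?thesis by (simp add: mult_ac)
    qed
    have sg: "summable (\<lambda>n. b / \<theta> * \<rho> ^ n)"
      using rho by (intro summable_mult summable_geometric) simp
    have "summable (\<lambda>n. Tn P n f i)"
      by (rule summable_comparison_test'[OF sg, of 0]) (use bn in auto)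
    moreover have "norm (\<Sum>n. Tn P n f i) \<le> (\<Sum>n. b / \<theta> * \<rho> ^ n)"
      by (rule norm_suminf_le[OF bn sg])
    moreover have "(\<Sum>n. b / \<theta> * \<rho> ^ n) = K * b"
    proof -
      have "(\<lambda>n. b / \<theta> * \<rho> ^ n) sums (b / \<theta> * (1 / (1 - \<rho>)))"
        by (intro sums_mult geometric_sums) (use rho in simp)
      then have "(\<Sum>n. b / \<theta> * \<rho> ^ n) = b / \<theta> * (1 / (1 - \<rho>))" by (rule sums_unique[symmetric])
      then show ?thesis by (simp add: K_def)
    qed
    ultimately show ?thesis by simp
  qed
  then show ?thesis using K0 by blast
qed

lemma dirs_eq: "(dirs :: (real^'d) set) = range (\<lambda>l. axis l 1) \<union> range (\<lambda>l. axis l (-1))"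
  by (auto simp: dirs_def)

lemma finite_dirs: "finite (dirs :: (real^'d) set)"
  unfolding dirs_eq by simp

lemma axis_neg: "axis l (-1::real) = - axis l 1"
  by (simp add: vec_eq_iff axis_def)

lemma norm_dirs: "u \<in> dirs \<Longrightarrow> norm (u :: real^'d) = 1"
  unfolding dirs_eq by (auto simp: axis_neg)

lemma axis_ne: "axis l (1::real) \<noteq> axis l' (-1)"
  by (simp add: axis_eq_axis)

lemma sum_dirs_comp:
  "(\<Sum>u\<in>(dirs :: (real^'d) set). F u * u $ l) = F (axis l 1) - F (axis l (-1))"
proof -
  have disj: "range (\<lambda>l. axis l (1::real)) \<inter> range (\<lambda>l. axis l (-1)) = ({} :: (real^'d) set)"
    using axis_ne by blast
  have inj1: "inj (\<lambda>l. axis l (1::real) :: real^'d)" by (auto intro!: injI simp: axis_eq_axis)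
  have inj2: "inj (\<lambda>l. axis l (-1::real) :: real^'d)" by (auto intro!: injI simp: axis_eq_axis)
  have "(\<Sum>u\<in>(dirs :: (real^'d) set). F u * u $ l)
     = (\<Sum>u\<in>range (\<lambda>l. axis l (1::real)). F u * u $ l) + (\<Sum>u\<in>range (\<lambda>l. axis l (-1::real)). F u * u $ l)"
    unfolding dirs_eq by (rule sum.union_disjoint) (use disj in auto)
  also have "(\<Sum>u\<in>range (\<lambda>l. axis l (1::real)). F u * u $ l) = (\<Sum>l'\<in>UNIV. F (axis l' 1) * (axis l' 1 :: real^'d) $ l)"
    by (simp add: sum.reindex[OF inj1])
  also have "\<dots> = F (axis l 1)"
    by (simp add: axis_def if_distrib cong: if_cong)
  also have "(\<Sum>u\<in>range (\<lambda>l. axis l (-1::real)). F u * u $ l) = (\<Sum>l'\<in>UNIV. F (axis l' (-1)) * (axis l' (-1) :: real^'d) $ l)"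
    by (simp add: sum.reindex[OF inj2])
  also have "\<dots> = - F (axis l (-1))"
    by (simp add: axis_def if_distrib cong: if_cong)
  finally show ?thesis by simp
qed

lemma qref_pos: "qref p k y (axis l 1) = (if y $ l = 1 then 0
          else if y $ l = 0 then p k y (axis l 1) + p k y (axis l (-1))
          else p k y (axis l 1))"
proof -
  have "(SOME l'. axis l (1::real) = axis l' 1) = l"
    by (rule some_equality) (auto simp: axis_eq_axis)
  then show ?thesis unfolding qref_def by auto
qed

lemma qref_neg: "qref p k y (axis l (-1)) = (if y $ l = 0 then 0
          else if y $ l = 1 then p k y (axis l 1) + p k y (axis l (-1))
          else p k y (axis l (-1)))"
proof -
  have "(SOME l'. axis l (-1::real) = axis l' (-1)) = l"
    by (rule some_equality) (auto simp: axis_eq_axis)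
  moreover have "\<not> (\<exists>l'. axis l (-1::real) = axis l' 1)" using axis_ne by metis
  ultimately show ?thesis unfolding qref_def by auto
qed

lemma qref_bounds:
  fixes p :: "'e \<Rightarrow> real^'d \<Rightarrow> real^'d \<Rightarrow> real"
  assumes nn: "\<forall>k y u. u \<in> dirs \<longrightarrow> 0 \<le> p k y u"
    and s1: "\<forall>k y. (\<Sum>u\<in>dirs. p k y u) = 1"
  shows "0 \<le> qref p k y u \<and> qref p k y u \<le> 1"
proof -
  have p1: "p k y u \<le> 1" if "u \<in> dirs" for u
  proof -
    have "p k y u \<le> (\<Sum>u\<in>dirs. p k y u)"
      by (rule member_le_sum) (use that nn finite_dirs in auto)
    then show ?thesis using s1 by simp
  qed
  have p2: "p k y (axis l 1) + p k y (axis l (-1)) \<le> 1" for l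
  proof -
    have "p k y (axis l 1) + p k y (axis l (-1)) = (\<Sum>u\<in>{axis l 1, axis l (-1)}. p k y u)"
      using axis_ne[of l l] by simp
    also have "\<dots> \<le> (\<Sum>u\<in>dirs. p k y u)"
    proof (rule sum_mono2[OF finite_dirs])
      show "{axis l 1, axis l (- 1)} \<subseteq> dirs" by (auto simp: dirs_def)
    next
      fix b assume "b \<in> dirs - {axis l 1, axis l (- 1)}"
      then show "0 \<le> p k y b" using nn by blast
    qed
    finally show ?thesis using s1 by simp
  qed
  have d1: "axis l 1 \<in> dirs" "axis l (-1) \<in> dirs" for l :: 'd by (auto simp: dirs_def)
  show ?thesis
  proof (cases "\<exists>l. u = axis l 1")
    case True
    then obtain l where "u = axis l 1" by blast
    moreover have "0 \<le> p k y (axis l 1)" "0 \<le> p k y (axis l (-1))" using nn d1[of l] by auto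
    ultimately show ?thesis using p1[OF d1(1)[of l]] p2[of l] by (auto simp: qref_pos)
  next
    case False
    show ?thesis
    proof (cases "\<exists>l. u = axis l (-1)")
      case True
      then obtain l where "u = axis l (-1)" by blast
      moreover have "0 \<le> p k y (axis l 1)" "0 \<le> p k y (axis l (-1))" using nn d1[of l] by auto
      ultimately show ?thesis using p1[OF d1(2)[of l]] p2[of l] by (auto simp: qref_neg)
    next
      case False2: False
      then show ?thesis using False unfolding qref_def by auto
    qed
  qed
qed

lemma hg_comp:
  "(rdrift p k y - drift p k y) $ l =
     (if y $ l = 1 then - 2 * p k y (axis l 1) else if y $ l = 0 then 2 * p k y (axis l (-1)) else 0)"
proof -
  have "(rdrift p k y - drift p k y) $ l = (\<Sum>u\<in>dirs. (qref p k y u - p k y u) * u $ l)"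
    by (simp add: rdrift_def drift_def sum_subtractf left_diff_distrib)
  also have "\<dots> = (qref p k y (axis l 1) - p k y (axis l 1)) - (qref p k y (axis l (-1)) - p k y (axis l (-1)))"
    by (rule sum_dirs_comp)
  also have "\<dots> = (if y $ l = 1 then - 2 * p k y (axis l 1) else if y $ l = 0 then 2 * p k y (axis l (-1)) else 0)"
    unfolding qref_pos qref_neg by auto
  finally show ?thesis .
qed

lemma C2_lip:
  fixes f :: "real^'d \<Rightarrow> real"
  assumes "C2_bdd f"
  shows "\<exists>B. \<forall>y y'. \<bar>f y - f y'\<bar> \<le> B * norm (y - y')"
proof -
  obtain Df :: "real^'d \<Rightarrow> ((real^'d) \<Rightarrow>\<^sub>L real)" and D2f :: "real^'d \<Rightarrow> ((real^'d) \<Rightarrow>\<^sub>L ((real^'d) \<Rightarrow>\<^sub>L real))" and B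
    where d: "\<And>y. (f has_derivative blinfun_apply (Df y)) (at y)" and b: "\<And>y. norm (Df y) \<le> B"
    using assms unfolding C2_bdd_def by blast
  have "\<bar>f y - f y'\<bar> \<le> B * norm (y - y')" for y y'
  proof -
    have "norm (f y - f y') \<le> B * norm (y - y')"
    proof (rule differentiable_bound[of UNIV f "\<lambda>x. blinfun_apply (Df x)"])
      show "onorm (blinfun_apply (Df x)) \<le> B" for x using b[of x] by (simp add: norm_blinfun.rep_eq)
    qed (use d in auto)
    then show ?thesis by simp
  qed
  then show ?thesis by blast
qed

lemma drift_lip:
  fixes p :: "'e::finite \<Rightarrow> real^'d \<Rightarrow> real^'d \<Rightarrow> real"
  assumes "\<forall>k u. u \<in> dirs \<longrightarrow> C2_bdd (\<lambda>y. p k y u)"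
  shows "\<exists>L\<ge>0. \<forall>k y y'. norm (drift p k y - drift p k y') \<le> L * norm (y - y')"
proof -
  have "\<forall>k u. \<exists>B. u \<in> dirs \<longrightarrow> (\<forall>y y'. \<bar>p k y u - p k y' u\<bar> \<le> B * norm (y - y'))"
    using assms C2_lip by blast
  then obtain Bf where Bf: "\<And>k u y y'. u \<in> dirs \<Longrightarrow> \<bar>p k y u - p k y' u\<bar> \<le> Bf k u * norm (y - y')"
    by metis
  define L where "L = (\<Sum>k\<in>UNIV. \<Sum>u\<in>dirs. \<bar>Bf k u\<bar>)"
  have L0: "0 \<le> L" unfolding L_def by (intro sum_nonneg) auto
  have "norm (drift p k y - drift p k y') \<le> L * norm (y - y')" for k y y'
  proof -
    have "drift p k y - drift p k y' = (\<Sum>u\<in>dirs. (p k y u - p k y' u) *\<^sub>R u)"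
      by (simp add: drift_def sum_subtractf scaleR_diff_left)
    then have "norm (drift p k y - drift p k y') \<le> (\<Sum>u\<in>dirs. norm ((p k y u - p k y' u) *\<^sub>R u))"
      by (metis norm_sum)
    also have "\<dots> \<le> (\<Sum>u\<in>dirs. \<bar>Bf k u\<bar> * norm (y - y'))"
    proof (rule sum_mono)
      fix u :: "real^'d" assume u: "u \<in> dirs"
      have "\<bar>p k y u - p k y' u\<bar> \<le> \<bar>Bf k u\<bar> * norm (y - y')"
        using Bf[OF u, of k y y'] by (meson abs_ge_self mult_right_mono norm_ge_zero order_trans)
      then show "norm ((p k y u - p k y' u) *\<^sub>R u) \<le> \<bar>Bf k u\<bar> * norm (y - y')"
        using norm_dirs[OF u] by simp
    qed
    also have "\<dots> = (\<Sum>u\<in>dirs. \<bar>Bf k u\<bar>) * norm (y - y')" by (simp add: sum_distrib_right)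
    also have "\<dots> \<le> L * norm (y - y')"
    proof (rule mult_right_mono)
      show "(\<Sum>u\<in>dirs. \<bar>Bf k u\<bar>) \<le> L" unfolding L_def
        by (rule member_le_sum[where i=k and f="\<lambda>k. \<Sum>u\<in>dirs. \<bar>Bf k u\<bar>"]) (auto intro: sum_nonneg)
    qed simp
    finally show ?thesis .
  qed
  then show ?thesis using L0 by blast
qed

lemma drift_bd:
  assumes nn: "\<forall>k y u. u \<in> dirs \<longrightarrow> 0 \<le> p k y u"
    and s1: "\<forall>k y. (\<Sum>u\<in>dirs. p k y u) = 1"
  shows "norm (drift p k y) \<le> 1"
proof -
  have "norm (drift p k y) \<le> (\<Sum>u\<in>dirs. norm (p k y u *\<^sub>R u))"
    unfolding drift_def by (rule norm_sum)
  also have "\<dots> = (\<Sum>u\<in>dirs. p k y u)"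
    using nn norm_dirs by (intro sum.cong) auto
  finally show ?thesis using s1 by simp
qed

lemma corr_facts:
  fixes P :: "'e::finite \<Rightarrow> 'e \<Rightarrow> real"
    and p :: "'e \<Rightarrow> real^'d \<Rightarrow> real^'d \<Rightarrow> real"
  assumes st: "stochastic P" and irr: "irreducible_mc P" and ap: "aperiodic_mc P"
    and inv: "invariant_prob P \<mu>"
    and nn: "\<forall>k y u. u \<in> dirs \<longrightarrow> 0 \<le> p k y u"
    and s1: "\<forall>k y. (\<Sum>u\<in>dirs. p k y u) = 1"
    and c2: "\<forall>k u. u \<in> dirs \<longrightarrow> C2_bdd (\<lambda>y. p k y u)"
    and m0: "\<forall>y. (\<Sum>k\<in>UNIV. \<mu> k *\<^sub>R drift p k y) = 0"
  shows "\<exists>V\<ge>0. \<exists>Lv\<ge>0. \<forall>i y y'. norm (corr P p i y) \<le> V \<and>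
            norm (corr P p i y - corr P p i y') \<le> Lv * norm (y - y')"
proof -
  obtain K where K0: "0 \<le> K" and K: "\<And>(f::'e \<Rightarrow> real^'d) b i. (\<Sum>j\<in>UNIV. \<mu> j *\<^sub>R f j) = 0 \<Longrightarrow> (\<forall>j. norm (f j) \<le> b)
      \<Longrightarrow> summable (\<lambda>n. Tn P n f i) \<and> norm (\<Sum>n. Tn P n f i) \<le> K * b"
    using Tn_series[OF st irr ap inv] by blast
  obtain L where L0: "0 \<le> L" and L: "\<And>k y y'. norm (drift p k y - drift p k y') \<le> L * norm (y - y')"
    using drift_lip[OF c2] by blast
  have ce: "corr P p i y = (\<Sum>n. Tn P n (\<lambda>j. drift p j y) i)" for i y
    by (simp add: corr_def Tn_def)
  have bd: "summable (\<lambda>n. Tn P n (\<lambda>j. drift p j y) i) \<and> norm (corr P p i y) \<le> K" for i y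
    using K[of "\<lambda>j. drift p j y" 1 i] m0 drift_bd[OF nn s1] unfolding ce by simp
  have "norm (corr P p i y - corr P p i y') \<le> K * L * norm (y - y')" for i y y'
  proof -
    have "corr P p i y - corr P p i y' = (\<Sum>n. Tn P n (\<lambda>j. drift p j y) i - Tn P n (\<lambda>j. drift p j y') i)"
      unfolding ce by (rule suminf_diff) (use bd in auto)
    also have "\<dots> = (\<Sum>n. Tn P n (\<lambda>j. drift p j y - drift p j y') i)"
      by (simp add: Tn_diff)
    finally have e: "corr P p i y - corr P p i y' = (\<Sum>n. Tn P n (\<lambda>j. drift p j y - drift p j y') i)" .
    have "(\<Sum>j\<in>UNIV. \<mu> j *\<^sub>R (drift p j y - drift p j y')) = 0"
      using m0 by (simp add: scaleR_diff_right sum_subtractf)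
    from K[OF this, of "L * norm (y - y')" i] L
    show ?thesis unfolding e by (simp add: mult.assoc)
  qed
  moreover have "0 \<le> K * L" using K0 L0 by simp
  ultimately show ?thesis using bd K0 by blast
qed

lemma cm_bd:
  fixes p :: "'e::finite \<Rightarrow> real^'d \<Rightarrow> real^'d \<Rightarrow> real"
  assumes nn: "\<forall>k y u. u \<in> dirs \<longrightarrow> 0 \<le> p k y u"
    and s1: "\<forall>k y. (\<Sum>u\<in>dirs. p k y u) = 1"
    and Lv: "\<And>i y y'. norm (corr P p i y - corr P p i y') \<le> Lv * norm (y - y')"
    and L: "\<And>k y y'. norm (drift p k y - drift p k y') \<le> L * norm (y - y')"
    and m1: "1 \<le> m"
  shows "norm (cm P p m i y) \<le> real (card (dirs :: (real^'d) set)) * (Lv + L) / real m"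
proof -
  have "norm (cm P p m i y) \<le> (\<Sum>u\<in>(dirs :: (real^'d) set). norm (qref p i y u *\<^sub>R
      ((corr P p i (y + inverse (real m) *\<^sub>R u) - drift p i (y + inverse (real m) *\<^sub>R u))
       - (corr P p i y - drift p i y))))"
    unfolding cm_def by (rule norm_sum)
  also have "\<dots> \<le> (\<Sum>u\<in>(dirs :: (real^'d) set). (Lv + L) / real m)"
  proof (rule sum_mono)
    fix u :: "real^'d" assume u: "u \<in> dirs"
    define y' where "y' = y + inverse (real m) *\<^sub>R u"
    have ny: "norm (y' - y) = 1 / real m" using norm_dirs[OF u] m1 by (simp add: y'_def divide_inverse)
    have q: "\<bar>qref p i y u\<bar> \<le> 1" using qref_bounds[OF nn s1, of i y u] by simp
    have "norm ((corr P p i y' - drift p i y') - (corr P p i y - drift p i y))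
        \<le> norm (corr P p i y' - corr P p i y) + norm (drift p i y' - drift p i y)"
      by (rule order_trans[OF _ norm_triangle_ineq4]) (simp add: algebra_simps)
    also have "\<dots> \<le> Lv * norm (y' - y) + L * norm (y' - y)" using Lv L by (rule add_mono)
    also have "\<dots> = (Lv + L) / real m" using ny by (simp add: algebra_simps add_divide_distrib)
    finally have w: "norm ((corr P p i y' - drift p i y') - (corr P p i y - drift p i y)) \<le> (Lv + L) / real m" .
    have "norm (qref p i y u *\<^sub>R ((corr P p i y' - drift p i y') - (corr P p i y - drift p i y)))
       = \<bar>qref p i y u\<bar> * norm ((corr P p i y' - drift p i y') - (corr P p i y - drift p i y))" by simp
    also have "\<dots> \<le> 1 * ((Lv + L) / real m)"
      using q w by (intro mult_mono) auto
    finally show "norm (qref p i y u *\<^sub>R ((corr P p i (y + inverse (real m) *\<^sub>R u) - drift p i (y + inverse (real m) *\<^sub>R u))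
       - (corr P p i y - drift p i y))) \<le> (Lv + L) / real m" unfolding y'_def by simp
  qed
  also have "\<dots> = real (card (dirs :: (real^'d) set)) * (Lv + L) / real m" by simp
  finally show ?thesis .
qed

lemma step_alg:
  fixes Dk u Z vk vk1 a c :: "real^'d"
  assumes "u = Z - vk1 + vk + a + c" "norm u = 1"
  shows "(norm (Dk + u))\<^sup>2 + 2 * ((Dk + u) \<bullet> vk1) = (norm Dk)\<^sup>2 + 2 * (Dk \<bullet> vk) + 1
     + 2 * (Dk \<bullet> Z) + 2 * (Dk \<bullet> a) + 2 * (Dk \<bullet> c) + 2 * (u \<bullet> vk1)"
proof -
  have "(norm (Dk + u))\<^sup>2 = (norm Dk)\<^sup>2 + 2 * (Dk \<bullet> u) + (norm u)\<^sup>2"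
    by (simp add: power2_norm_eq_inner inner_add inner_commute)
  moreover have "Dk \<bullet> u = Dk \<bullet> Z - Dk \<bullet> vk1 + Dk \<bullet> vk + Dk \<bullet> a + Dk \<bullet> c"
    using assms(1) by (simp add: inner_add_right inner_diff_right)
  ultimately show ?thesis using assms(2) by (simp add: inner_add_left algebra_simps)
qed

lemma hg_inner:
  fixes x Rn a :: "real^'d"
  assumes "\<And>l. 0 < a $ l \<Longrightarrow> x $ l = 0" "\<And>l. a $ l < 0 \<Longrightarrow> x $ l = M"
  shows "(x - Rn) \<bullet> a = - (Rn \<bullet> pos_part a) - ((M *\<^sub>R ones - Rn) \<bullet> neg_part a)"
proof -
  have t: "(x $ l - Rn $ l) * a $ l = - (Rn $ l * max (a $ l) 0) - (M - Rn $ l) * max (- a $ l) 0" for l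
  proof (cases "0 < a $ l")
    case True then show ?thesis using assms(1)[of l] by simp
  next
    case False
    show ?thesis
    proof (cases "a $ l < 0")
      case True then show ?thesis using assms(2)[of l] by (simp add: algebra_simps)
    next
      case False2: False
      then have "a $ l = 0" using False by simp
      then show ?thesis by simp
    qed
  qed
  have "(x - Rn) \<bullet> a = (\<Sum>l\<in>UNIV. (x $ l - Rn $ l) * a $ l)" by (simp add: inner_vec_def)
  also have "\<dots> = (\<Sum>l\<in>UNIV. - (Rn $ l * max (a $ l) 0) - (M - Rn $ l) * max (- a $ l) 0)"
    using t by simp
  also have "\<dots> = - (\<Sum>l\<in>UNIV. Rn $ l * max (a $ l) 0) - (\<Sum>l\<in>UNIV. (M - Rn $ l) * max (- a $ l) 0)"
    by (simp add: sum_subtractf sum_negf)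
  also have "\<dots> = - (Rn \<bullet> pos_part a) - ((M *\<^sub>R ones - Rn) \<bullet> neg_part a)"
    by (simp add: inner_vec_def pos_part_def neg_part_def ones_def)
  finally show ?thesis .
qed

theorem lemma5p2:
  fixes P :: "'e::finite \<Rightarrow> 'e \<Rightarrow> real"
    and \<mu> :: "'e \<Rightarrow> real"
    and p :: "'e \<Rightarrow> real^'d \<Rightarrow> real^'d \<Rightarrow> real"
  assumes "stochastic P" and "irreducible_mc P" and "aperiodic_mc P"
    and "invariant_prob P \<mu>"
    and "\<forall>k y u. u \<in> dirs \<longrightarrow> 0 \<le> p k y u"
    and "\<forall>k y. (\<Sum>u\<in>dirs. p k y u) = 1"
    and "\<forall>k u. u \<in> dirs \<longrightarrow> C2_bdd (\<lambda>y. p k y u)"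
    and "\<forall>y. (\<Sum>k\<in>UNIV. \<mu> k *\<^sub>R drift p k y) = 0"
  shows "\<exists>C::real. \<forall>m::nat. 1 \<le> m \<longrightarrow>
    (\<forall>(\<xi>::nat \<Rightarrow> 'e) (R::nat \<Rightarrow> real^'d).
      R 0 = 0 \<and>
      (\<forall>j. 0 < P (\<xi> j) (\<xi> (Suc j)) \<and> R (Suc j) - R j \<in> dirs \<and>
           0 < qref p (\<xi> j) (inverse (real m) *\<^sub>R R j) (R (Suc j) - R j))
      \<longrightarrow>
      (\<forall>n p' q'. 1 \<le> n \<and> n \<le> p' \<and> p' \<le> q' \<longrightarrow>
         (norm (R q' - R n))\<^sup>2
         + 2 * (\<Sum>k\<in>{p'..<q'}. (real m *\<^sub>R ones - R n) \<bullet>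
                  neg_part (rdrift p (\<xi> k) (inverse (real m) *\<^sub>R R k) - drift p (\<xi> k) (inverse (real m) *\<^sub>R R k)))
         + 2 * (\<Sum>k\<in>{p'..<q'}. R n \<bullet>
                  pos_part (rdrift p (\<xi> k) (inverse (real m) *\<^sub>R R k) - drift p (\<xi> k) (inverse (real m) *\<^sub>R R k)))
         \<le> (norm (R p' - R n))\<^sup>2 + C * (real (q' - p') + real m)
           + 2 * (\<Sum>k\<in>{p'..<q'}. (R k - R n) \<bullet> Zsucc P p m \<xi> R k)))"
proof -
  note st = assms(1) and irr = assms(2) and ap = assms(3) and inv = assms(4)
    and nn = assms(5) and s1 = assms(6) and c2 = assms(7) and m0 = assms(8)
  obtain V Lv where V0: "0 \<le> V" and Lv0: "0 \<le> Lv"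
    and Vb: "\<And>i y. norm (corr P p i y) \<le> V"
    and Lvb: "\<And>i y y'. norm (corr P p i y - corr P p i y') \<le> Lv * norm (y - y')"
    using corr_facts[OF st irr ap inv nn s1 c2 m0] by blast
  obtain L where L0: "0 \<le> L" and Lb: "\<And>k y y'. norm (drift p k y - drift p k y') \<le> L * norm (y - y')"
    using drift_lip[OF c2] by blast
  define cd where "cd = real (card (dirs :: (real^'d) set))"
  define dd where "dd = real CARD('d)"
  define K1 where "K1 = 1 + 2 * (dd * cd * (Lv + L)) + 2 * V"
  define C where "C = K1 + 4 * (dd * V)"
  have cd0: "0 \<le> cd" and dd0: "0 \<le> dd" by (auto simp: cd_def dd_def)
  have K10: "0 \<le> K1" unfolding K1_def using cd0 dd0 V0 Lv0 L0 by simp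
  show ?thesis
  proof (intro exI[of _ C] allI impI)
    fix m :: nat and \<xi> :: "nat \<Rightarrow> 'e" and R :: "nat \<Rightarrow> real^'d" and n p' q' :: nat
    assume m1: "1 \<le> m"
      and ch: "R 0 = 0 \<and> (\<forall>j. 0 < P (\<xi> j) (\<xi> (Suc j)) \<and> R (Suc j) - R j \<in> dirs \<and>
           0 < qref p (\<xi> j) (inverse (real m) *\<^sub>R R j) (R (Suc j) - R j))"
      and npq: "1 \<le> n \<and> n \<le> p' \<and> p' \<le> q'"
    define yk where "yk k = inverse (real m) *\<^sub>R R k" for k
    define a where "a k = rdrift p (\<xi> k) (yk k) - drift p (\<xi> k) (yk k)" for k
    define v where "v k = corr P p (\<xi> k) (yk k)" for k
    define c where "c k = cm P p m (\<xi> k) (yk k)" for k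
    define Z where "Z k = Zsucc P p m \<xi> R k" for k
    define D where "D k = R k - R n" for k
    define \<Phi> where "\<Phi> k = (norm (D k))\<^sup>2 + 2 * (D k \<bullet> v k)" for k
    have mpos: "0 < real m" using m1 by simp
    have ykl: "yk k $ l = R k $ l / real m" for k l by (simp add: yk_def field_simps)
    have rng: "\<forall>l. \<exists>z::int. R j $ l = of_int z \<and> 0 \<le> z \<and> z \<le> int m" for j
    proof (induction j)
      case 0
      then show ?case using ch by simp
    next
      case (Suc j)
      have ud: "R (Suc j) - R j \<in> dirs" and qp: "0 < qref p (\<xi> j) (yk j) (R (Suc j) - R j)"
        using ch unfolding yk_def by auto
      show ?case
      proof
        fix l
        obtain z where z: "R j $ l = of_int z" "0 \<le> z" "z \<le> int m" using Suc by blast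
        from ud obtain l' s where us: "R (Suc j) - R j = axis l' s" and s: "s = 1 \<or> s = -1"
          unfolding dirs_def by blast
        have RS: "R (Suc j) $ l = R j $ l + (if l = l' then s else 0)"
          using arg_cong[OF us, of "\<lambda>x. x $ l"] by (simp add: axis_def)
        show "\<exists>z::int. R (Suc j) $ l = of_int z \<and> 0 \<le> z \<and> z \<le> int m"
        proof (cases "l = l'")
          case False
          then show ?thesis using RS z by auto
        next
          case True
          show ?thesis
          proof (cases "s = 1")
            case s1': True
            have "yk j $ l \<noteq> 1" using qp unfolding us s1' True qref_pos by (auto split: if_splits)
            then have "z \<noteq> int m" using z(1) ykl[of j l] mpos by auto
            then show ?thesis using RS z True s1' by (intro exI[of _ "z + 1"]) auto
          next
            case False
            then have sm: "s = -1" using s by simp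
            have "yk j $ l \<noteq> 0" using qp unfolding us sm True qref_neg by (auto split: if_splits)
            then have "z \<noteq> 0" using z(1) ykl[of j l] mpos by auto
            then show ?thesis using RS z True sm by (intro exI[of _ "z - 1"]) auto
          qed
        qed
      qed
    qed
    have rng': "0 \<le> R j $ l \<and> R j $ l \<le> real m" for j l
    proof -
      obtain z where "R j $ l = of_int z" "0 \<le> z" "z \<le> int m" using rng[of j] by blast
      then show ?thesis by simp
    qed
    have Db: "norm (D k) \<le> dd * real m" for k
    proof -
      have "norm (D k) \<le> (\<Sum>l\<in>UNIV. \<bar>D k $ l\<bar>)" by (rule norm_le_l1_cart)
      also have "\<dots> \<le> (\<Sum>l\<in>(UNIV::'d set). real m)"
      proof (rule sum_mono)
        fix l
        show "\<bar>D k $ l\<bar> \<le> real m" using rng'[of k l] rng'[of n l] by (auto simp: D_def abs_le_iff)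
      qed
      finally show ?thesis by (simp add: dd_def)
    qed
    have step: "\<Phi> (Suc k) + 2 * ((real m *\<^sub>R ones - R n) \<bullet> neg_part (a k)) + 2 * (R n \<bullet> pos_part (a k))
        \<le> \<Phi> k + K1 + 2 * (D k \<bullet> Z k)" for k
    proof -
      define u where "u = R (Suc k) - R k"
      have ud: "u \<in> dirs" using ch unfolding u_def by blast
      have DS: "D (Suc k) = D k + u" unfolding D_def u_def by simp
      have Ze: "Z k = R (Suc k) + v (Suc k) - (R k + v k + a k + c k)"
        unfolding Z_def Zsucc_def v_def a_def c_def yk_def by (simp add: Let_def)
      have ue: "u = Z k - v (Suc k) + v k + a k + c k" unfolding Ze u_def by (simp add: algebra_simps)
      have eq: "\<Phi> (Suc k) = \<Phi> k + 1 + 2 * (D k \<bullet> Z k) + 2 * (D k \<bullet> a k) + 2 * (D k \<bullet> c k) + 2 * (u \<bullet> v (Suc k))"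
        unfolding \<Phi>_def DS by (rule step_alg[OF ue norm_dirs[OF ud]])
      have apos: "R k $ l = 0" if "0 < a k $ l" for l
      proof -
        have p0: "0 \<le> p (\<xi> k) (yk k) (axis l 1)" using nn by (metis (mono_tags, lifting) UnI1 dirs_eq rangeI)
        have "yk k $ l = 0" using that p0 unfolding a_def hg_comp by (auto split: if_splits)
        then show ?thesis using ykl[of k l] mpos by simp
      qed
      have aneg: "R k $ l = real m" if "a k $ l < 0" for l
      proof -
        have p0: "0 \<le> p (\<xi> k) (yk k) (axis l (-1))" using nn by (metis (mono_tags, lifting) UnI2 dirs_eq rangeI)
        have "yk k $ l = 1" using that p0 unfolding a_def hg_comp by (auto split: if_splits)
        then show ?thesis using ykl[of k l] mpos by simp
      qed
      have ha: "D k \<bullet> a k = - (R n \<bullet> pos_part (a k)) - ((real m *\<^sub>R ones - R n) \<bullet> neg_part (a k))"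
        unfolding D_def by (rule hg_inner) (use apos aneg in auto)
      have cb: "D k \<bullet> c k \<le> dd * cd * (Lv + L)"
      proof -
        have "D k \<bullet> c k \<le> norm (D k) * norm (c k)" by (rule norm_cauchy_schwarz)
        also have "\<dots> \<le> (dd * real m) * (cd * (Lv + L) / real m)"
          using Db[of k] cm_bd[OF nn s1 Lvb Lb m1, of "\<xi> k" "yk k"]
          by (intro mult_mono) (auto simp: c_def cd_def dd_def)
        also have "\<dots> = dd * cd * (Lv + L)" using mpos by (simp add: field_simps)
        finally show ?thesis .
      qed
      have vb: "u \<bullet> v (Suc k) \<le> V"
      proof -
        have "u \<bullet> v (Suc k) \<le> norm u * norm (v (Suc k))" by (rule norm_cauchy_schwarz)
        also have "\<dots> \<le> V" using norm_dirs[OF ud] Vb by (simp add: v_def)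
        finally show ?thesis .
      qed
      show ?thesis using eq ha cb vb unfolding K1_def by linarith
    qed
    have ind: "\<Phi> (p' + j) + 2 * (\<Sum>k\<in>{p'..<p' + j}. (real m *\<^sub>R ones - R n) \<bullet> neg_part (a k))
        + 2 * (\<Sum>k\<in>{p'..<p' + j}. R n \<bullet> pos_part (a k))
        \<le> \<Phi> p' + K1 * real j + 2 * (\<Sum>k\<in>{p'..<p' + j}. D k \<bullet> Z k)" for j
    proof (induction j)
      case 0
      then show ?case by simp
    next
      case (Suc j)
      have e: "p' + Suc j = Suc (p' + j)" by simp
      show ?case unfolding e sum.atLeastLessThan_Suc[OF le_add1]
        using Suc step[of "p' + j"] by (simp add: algebra_simps)
    qed
    obtain j where qj: "q' = p' + j" using npq by (metis le_add_diff_inverse)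
    have b1: "(norm (D q'))\<^sup>2 \<le> \<Phi> q' + 2 * (dd * real m * V)"
    proof -
      have "- (D q' \<bullet> v q') \<le> norm (D q') * norm (v q')"
        using norm_cauchy_schwarz[of "- D q'" "v q'"] by simp
      also have "\<dots> \<le> (dd * real m) * V" using Db Vb by (intro mult_mono) (auto simp: v_def dd_def)
      finally show ?thesis unfolding \<Phi>_def by simp
    qed
    have b2: "\<Phi> p' \<le> (norm (D p'))\<^sup>2 + 2 * (dd * real m * V)"
    proof -
      have "D p' \<bullet> v p' \<le> norm (D p') * norm (v p')" by (rule norm_cauchy_schwarz)
      also have "\<dots> \<le> (dd * real m) * V" using Db Vb by (intro mult_mono) (auto simp: v_def dd_def)
      finally show ?thesis unfolding \<Phi>_def by simp
    qed
    have Ce: "C * (real j + real m) = K1 * real j + 4 * (dd * real m * V) + (4 * (dd * V) * real j + K1 * real m)"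
      unfolding C_def by (simp add: algebra_simps)
    have "0 \<le> 4 * (dd * V) * real j + K1 * real m" using dd0 V0 K10 by simp
    then have fin: "(norm (D q'))\<^sup>2 + 2 * (\<Sum>k\<in>{p'..<q'}. (real m *\<^sub>R ones - R n) \<bullet> neg_part (a k))
        + 2 * (\<Sum>k\<in>{p'..<q'}. R n \<bullet> pos_part (a k))
        \<le> (norm (D p'))\<^sup>2 + C * (real (q' - p') + real m) + 2 * (\<Sum>k\<in>{p'..<q'}. D k \<bullet> Z k)"
      using ind[of j] b1 b2 Ce unfolding qj by simp
    then show "(norm (R q' - R n))\<^sup>2
         + 2 * (\<Sum>k\<in>{p'..<q'}. (real m *\<^sub>R ones - R n) \<bullet>
                  neg_part (rdrift p (\<xi> k) (inverse (real m) *\<^sub>R R k) - drift p (\<xi> k) (inverse (real m) *\<^sub>R R k)))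
         + 2 * (\<Sum>k\<in>{p'..<q'}. R n \<bullet>
                  pos_part (rdrift p (\<xi> k) (inverse (real m) *\<^sub>R R k) - drift p (\<xi> k) (inverse (real m) *\<^sub>R R k)))
         \<le> (norm (R p' - R n))\<^sup>2 + C * (real (q' - p') + real m)
           + 2 * (\<Sum>k\<in>{p'..<q'}. (R k - R n) \<bullet> Zsucc P p m \<xi> R k)"
      unfolding D_def a_def yk_def Z_def by simp
  qed
qed

end
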